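(* Let $T>0$ and $0<\delta<\min\{1,T/2\}$, let $3\delta\le z\le T-3\delta$ and let $f\in C^1([0,T]\setminus\{z\})$. Define $\alpha=\ln(1/\delta^3)/\delta$, $\gamma=\frac{1}{2\sigma(\alpha\delta)}$ with $\sigma=\tanh$, and $\chi_\delta(t)=\gamma\bigl(\sigma(\alpha(t-2\delta))-\sigma(\alpha(t-T+2\delta))\bigr)$. Then $$\Bigl|\int_0^T f(t)\chi_\delta'(t)\,dt-f(2\delta)+f(T-2\delta)\Bigr|\le\Bigl(T\|f\|_{L^\infty([0,T])}+3\ln(1/\delta)\|f'\|_{L^\infty(B)}\Bigr)\frac{4\delta}{1-\delta},$$ where $B=[\delta,3\delta]\cup[T-3\delta,T-\delta]$. *)

theory Defs
  imports "HOL-Analysis.Analysis"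
begin

definition alpha_par :: "real \<Rightarrow> real" where
  "alpha_par \<delta> = ln (1 / \<delta> ^ 3) / \<delta>"

definition gamma_par :: "real \<Rightarrow> real" where
  "gamma_par \<delta> = 1 / (2 * tanh (alpha_par \<delta> * \<delta>))"

definition chi :: "real \<Rightarrow> real \<Rightarrow> real \<Rightarrow> real" where
  "chi T \<delta> t = gamma_par \<delta> *
     (tanh (alpha_par \<delta> * (t - 2 * \<delta>)) - tanh (alpha_par \<delta> * (t - T + 2 * \<delta>)))"

text \<open>Supremum norm of g over S, valued in the extended reals (may be infinite).
  For functions continuous on S (as here) it coincides with the essential supremum.\<close>
definition sup_norm_on :: "real set \<Rightarrow> (real \<Rightarrow> real) \<Rightarrow> ereal" where
  "sup_norm_on S g = (SUP t\<in>S. ereal \<bar>g t\<bar>)"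

end

theory Submission
  imports Defs
begin

lemma int_fk:
  fixes f k :: "real \<Rightarrow> real"
  assumes fc: "continuous_on ({0..T}-{z}) f" and fb: "\<forall>t\<in>{0..T}-{z}. \<bar>f t\<bar> \<le> M"
    and kc: "continuous_on {0..T} k"
  shows "(\<lambda>t. f t * k t) integrable_on {0..T}"
proof -
  have "compact (k ` {0..T})" using kc compact_continuous_image by blast
  then obtain B where B: "\<forall>x\<in>k ` {0..T}. norm x \<le> B" using compact_imp_bounded bounded_iff by metis
  have neg: "negligible {z}" by simp
  have c: "continuous_on ({0..T}-{z}) (\<lambda>t. f t * k t)"
    by (intro continuous_intros fc continuous_on_subset[OF kc]) auto
  have m: "(\<lambda>t. f t * k t) \<in> borel_measurable (lebesgue_on ({0..T}-{z}))"
    by (rule continuous_imp_measurable_on_sets_lebesgue[OF c]) auto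
  have g: "(\<lambda>t. M * B) integrable_on ({0..T}-{z})"
    by (rule integrable_spike_set[OF integrable_const_ivl[of "M*B" 0 T]])
       (auto intro: negligible_subset[OF neg])
  have "(\<lambda>t. f t * k t) absolutely_integrable_on ({0..T}-{z})"
  proof (rule measurable_bounded_by_integrable_imp_absolutely_integrable[OF m _ g])
    show "{0..T} - {z} \<in> sets lebesgue" by auto
    fix x assume x: "x \<in> {0..T}-{z}"
    have "\<bar>f x\<bar> \<le> M" using fb x by auto
    moreover have "\<bar>k x\<bar> \<le> B" using B x by auto
    ultimately show "norm (f x * k x) \<le> M * B"
      by (simp add: abs_mult mult_mono')
  qed
  then have "(\<lambda>t. f t * k t) integrable_on ({0..T}-{z})"
    using absolutely_integrable_on_def by blast
  then show ?thesis
    by (rule integrable_spike_set) (auto intro: negligible_subset[OF neg])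
qed

lemma icm: "f integrable_on S \<Longrightarrow> (\<lambda>x. (c::real) * f x) integrable_on S"
  using integrable_cmul[of f S c] by simp

lemma negle: "(g::real) > 0 \<Longrightarrow> x > -1 \<Longrightarrow> -(g*x) \<le> g"
proof -
  assume "g > 0" "x > -1"
  then have "g * (-x) \<le> g * 1" by (intro mult_left_mono) auto
  then show ?thesis by simp
qed

lemma bump:
  fixes f k :: "real \<Rightarrow> real"
  assumes pq: "0 \<le> p" "p \<le> q" "q \<le> T"
    and fc: "continuous_on ({0..T}-{z}) f" and fb: "\<forall>t\<in>{0..T}-{z}. \<bar>f t\<bar> \<le> M"
    and vb: "\<bar>v\<bar> \<le> M" and L: "L \<ge> 0" and fL: "\<forall>t\<in>{p..q}-{z}. \<bar>f t - v\<bar> \<le> L"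
    and kc: "continuous_on {0..T} k" and kpos: "\<forall>t\<in>{0..T}. k t \<ge> 0"
    and k1: "(k has_integral 1) {p..q}" and kK: "(k has_integral K) {0..T}"
  shows "\<bar>integral {0..T} (\<lambda>t. f t * k t) - v\<bar> \<le> L + M * (K - 1)"
proof -
  define g where "g t = (if t = z then v else f t)" for t
  have neg: "negligible {z}" by simp
  have gb: "\<forall>t\<in>{0..T}. \<bar>g t\<bar> \<le> M" using fb vb by (auto simp: g_def)
  have gL: "\<forall>t\<in>{p..q}. \<bar>g t - v\<bar> \<le> L" using fL L by (auto simp: g_def)
  have fi: "(\<lambda>t. f t * k t) integrable_on {0..T}" by (rule int_fk[OF fc fb kc])
  have eqI: "integral {0..T} (\<lambda>t. f t * k t) = integral {0..T} (\<lambda>t. g t * k t)"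
    by (rule integral_spike[OF neg]) (auto simp: g_def)
  have gi: "(\<lambda>t. g t * k t) integrable_on {0..T}"
    by (rule integrable_spike[OF fi neg]) (auto simp: g_def)
  have ki: "k integrable_on {a..b}" if "0 \<le> a" "b \<le> T" for a b
    using kc that by (intro integrable_continuous_interval continuous_on_subset[OF kc]) auto
  have gis: "(\<lambda>t. g t * k t) integrable_on {a..b}" if "0 \<le> a" "b \<le> T" for a b
    using that by (intro integrable_on_subinterval[OF gi]) auto
  have kint: "integral {0..p} k + 1 + integral {q..T} k = K"
  proof -
    have "integral {0..p} k + integral {p..q} k = integral {0..q} k"
        by (rule Henstock_Kurzweil_Integration.integral_combine) (use pq ki in auto)
    moreover have "integral {0..q} k + integral {q..T} k = integral {0..T} k"
      by (rule Henstock_Kurzweil_Integration.integral_combine) (use pq ki in auto)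
    ultimately show ?thesis using k1 kK by (simp add: integral_unique)
  qed
  define I1 where "I1 = integral {0..p} (\<lambda>t. g t * k t)"
  define I2 where "I2 = integral {p..q} (\<lambda>t. g t * k t)"
  define I3 where "I3 = integral {q..T} (\<lambda>t. g t * k t)"
  have split: "integral {0..T} (\<lambda>t. g t * k t) = I1 + I2 + I3"
  proof -
    have "I1 + I2 = integral {0..q} (\<lambda>t. g t * k t)"
      unfolding I1_def I2_def by (rule Henstock_Kurzweil_Integration.integral_combine) (use pq gis in auto)
    moreover have "integral {0..q} (\<lambda>t. g t * k t) + I3 = integral {0..T} (\<lambda>t. g t * k t)"
      unfolding I3_def by (rule Henstock_Kurzweil_Integration.integral_combine) (use pq gis in auto)
    ultimately show ?thesis by simp
  qed
  have outer: "\<bar>integral {a..b} (\<lambda>t. g t * k t)\<bar> \<le> M * integral {a..b} k"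
    if "0 \<le> a" "b \<le> T" for a b
  proof -
    have "norm (integral {a..b} (\<lambda>t. g t * k t)) \<le> integral {a..b} (\<lambda>t. M * k t)"
    proof (rule integral_norm_bound_integral)
      show "(\<lambda>t. g t * k t) integrable_on {a..b}" using gis that by auto
      show "(\<lambda>t. M * k t) integrable_on {a..b}" using ki[OF that] by (rule icm)
      fix x assume "x \<in> {a..b}"
      then have "\<bar>g x\<bar> \<le> M" "k x \<ge> 0" using gb kpos that by auto
      then show "norm (g x * k x) \<le> M * k x" by (simp add: abs_mult mult_right_mono)
    qed
    then show ?thesis by simp
  qed
  have mid: "\<bar>I2 - v\<bar> \<le> L"
  proof -
    have kiq: "k integrable_on {p..q}" using k1 by blast
    have "I2 - v = integral {p..q} (\<lambda>t. g t * k t) - integral {p..q} (\<lambda>t. v * k t)"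
      using k1 by (simp add: I2_def integral_unique)
    also have "\<dots> = integral {p..q} (\<lambda>t. (g t - v) * k t)"
      using gis[of p q] pq kiq
      by (subst integral_diff[symmetric]) (auto intro: icm simp: algebra_simps)
    finally have e: "I2 - v = integral {p..q} (\<lambda>t. (g t - v) * k t)" .
    have "norm (integral {p..q} (\<lambda>t. (g t - v) * k t)) \<le> integral {p..q} (\<lambda>t. L * k t)"
    proof (rule integral_norm_bound_integral)
      show "(\<lambda>t. (g t - v) * k t) integrable_on {p..q}"
        using gis[of p q] pq kiq
        by (auto intro!: integrable_diff icm simp: algebra_simps)
      show "(\<lambda>t. L * k t) integrable_on {p..q}" using kiq by (intro icm)
      fix x assume "x \<in> {p..q}"
      then have "\<bar>g x - v\<bar> \<le> L" "k x \<ge> 0" using gL kpos pq by auto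
      then show "norm ((g x - v) * k x) \<le> L * k x" by (simp add: abs_mult mult_right_mono)
    qed
    also have "\<dots> = L" using k1 by (simp add: integral_unique)
    finally show ?thesis using e by simp
  qed
  have o1: "\<bar>I1\<bar> \<le> M * integral {0..p} k" unfolding I1_def using outer pq by auto
  have o3: "\<bar>I3\<bar> \<le> M * integral {q..T} k" unfolding I3_def using outer pq by auto
  have "\<bar>integral {0..T} (\<lambda>t. f t * k t) - v\<bar> \<le> \<bar>I1\<bar> + \<bar>I2 - v\<bar> + \<bar>I3\<bar>"
    using eqI split by simp
  also have "\<dots> \<le> M * integral {0..p} k + L + M * integral {q..T} k" using o1 o3 mid by simp
  also have "\<dots> = L + M * (K - 1)" using kint[symmetric] by (simp add: algebra_simps)
  finally show ?thesis .
qed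

lemma mvt_bd:
  fixes f f' :: "real \<Rightarrow> real"
  assumes der: "\<forall>t\<in>{0..T}-{z}. (f has_real_derivative f' t) (at t within ({0..T}-{z}))"
    and "0 \<le> p" "q \<le> T" "p < c" "c < q" "z \<le> p \<or> q \<le> z" "c - p \<le> d" "q - c \<le> d"
    and bd: "\<forall>x\<in>{p..q}-{z}. \<bar>f' x\<bar> \<le> M'"
    and t: "t \<in> {p..q}-{z}"
  shows "\<bar>f t - f c\<bar> \<le> M' * d"
proof -
  define S where "S = {min t c..max t c}"
  have sub: "S \<subseteq> {p..q}-{z}"
  proof
    fix x assume x: "x \<in> S"
    then have "x \<in> {p..q}" using t assms(2-5) by (auto simp: S_def)
    moreover have "x \<noteq> z"
    proof
      assume "x = z"
      then show False using x t assms(4-6) by (auto simp: S_def min_def max_def split: if_splits)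
    qed
    ultimately show "x \<in> {p..q}-{z}" by auto
  qed
  have "norm (f t - f c) \<le> M' * norm (t - c)"
  proof (rule field_differentiable_bound[of S f f' M'])
    show "convex S" by (simp add: S_def)
    fix x assume "x \<in> S"
    then have x: "x \<in> {p..q}-{z}" using sub by auto
    then have "x \<in> {0..T}-{z}" using assms(2,3) by auto
    then have "(f has_real_derivative f' x) (at x within ({0..T}-{z}))" using der by auto
    then show "(f has_field_derivative f' x) (at x within S)"
      by (rule DERIV_subset) (use sub assms(2,3) in auto)
    show "norm (f' x) \<le> M'" using bd x by auto
  qed (auto simp: S_def)
  moreover have "M' \<ge> 0" using bd t by (meson abs_ge_zero order_trans)
  moreover have "\<bar>t - c\<bar> \<le> d" using t assms(6-8) by auto
  ultimately show ?thesis by (smt (verit) mult_left_mono real_norm_def)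
qed

theorem lemmaA3:
  fixes T \<delta> z :: real and f f' :: "real \<Rightarrow> real"
  assumes "T > 0"
    and "0 < \<delta>" and "\<delta> < min 1 (T / 2)"
    and "3 * \<delta> \<le> z" and "z \<le> T - 3 * \<delta>"
    and "\<forall>t\<in>{0..T} - {z}. (f has_real_derivative f' t) (at t within ({0..T} - {z}))"
    and "continuous_on ({0..T} - {z}) f'"
  shows "ereal \<bar>integral {0..T} (\<lambda>t. f t * deriv (chi T \<delta>) t) - f (2 * \<delta>) + f (T - 2 * \<delta>)\<bar>
         \<le> (ereal T * sup_norm_on ({0..T} - {z}) f
            + ereal (3 * ln (1 / \<delta>)) * sup_norm_on (({\<delta>..3 * \<delta>} \<union> {T - 3 * \<delta>..T - \<delta>}) - {z}) f')
           * ereal (4 * \<delta> / (1 - \<delta>))"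
proof -
  note der = assms(6)
  have d0: "0 < \<delta>" and d1: "\<delta> < 1" and dT: "2 * \<delta> < T" using assms(2,3) by auto
  define a where "a = alpha_par \<delta>"
  define g where "g = gamma_par \<delta>"
  define B where "B = ({\<delta>..3 * \<delta>} \<union> {T - 3 * \<delta>..T - \<delta>}) - {z}"
  define Nf where "Nf = sup_norm_on ({0..T} - {z}) f"
  define Nd where "Nd = sup_norm_on B f'"
  have lnd: "ln (1 / \<delta>) = - ln \<delta>" using d0 by (simp add: ln_div)
  have lnpos: "ln (1 / \<delta>) > 0" using d0 d1 by simp
  have ad: "a * \<delta> = - 3 * ln \<delta>"
    using d0 by (simp add: a_def alpha_par_def ln_div ln_realpow)
  have apos: "a > 0"
  proof -
    have "a * \<delta> > 0" using ad d0 d1 by simp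
    then show ?thesis using d0 by (simp add: zero_less_mult_iff)
  qed
  have d6: "\<delta> ^ 6 < 1" "0 < \<delta> ^ 6" using d0 d1 by (auto simp: power_less_one_iff)
  have ex: "exp (- 2 * (a * \<delta>)) = \<delta> ^ 6"
  proof -
    have "- 2 * (a * \<delta>) = ln (\<delta> ^ 6)" using ad d0 by (simp add: ln_realpow)
    then show ?thesis using d6 by simp
  qed
  have th: "tanh (a * \<delta>) = (1 - \<delta> ^ 6) / (1 + \<delta> ^ 6)"
    using ex by (simp add: tanh_real_altdef del: exp_minus)
  have thpos: "tanh (a * \<delta>) > 0" proof - have "0 < 1 - \<delta>^6" "0 < 1 + \<delta>^6" using d6 by linarith+ then show ?thesis using th by (metis divide_pos_pos) qed
  have gd: "2 * g * tanh (a * \<delta>) = 1"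
    using thpos apos d0 unfolding g_def gamma_par_def a_def[symmetric] by simp
  have gpos: "g > 0" using thpos unfolding g_def gamma_par_def a_def[symmetric] by simp
  have g2: "2 * g - 1 = 2 * \<delta> ^ 6 / (1 - \<delta> ^ 6)"
  proof -
    have aux: "\<And>x::real. 2 * g * x = 1 \<Longrightarrow> x > 0 \<Longrightarrow> 2 * g = 1 / x" by (simp add: field_simps)
    have "2 * g = 1 / tanh (a * \<delta>)" by (rule aux[OF gd thpos])
    then have "2 * g = (1 + \<delta> ^ 6) / (1 - \<delta> ^ 6)" using th by simp
    moreover have "\<And>x::real. x < 1 \<Longrightarrow> 2 * g = (1 + x) / (1 - x) \<Longrightarrow> 2 * g - 1 = 2 * x / (1 - x)" by (simp add: field_simps)
    ultimately show ?thesis using d6 by blast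
  qed
  define kk where "kk c t = g * a * (1 - tanh (a * (t - c)) ^ 2)" for c t
  have Kd: "((\<lambda>t. g * tanh (a * (t - c))) has_real_derivative kk c t) (at t)" for c t
    unfolding kk_def by (auto intro!: derivative_eq_intros simp: algebra_simps)
  have kint: "(kk c has_integral (g * tanh (a * (y - c)) - g * tanh (a * (x - c)))) {x..y}"
    if "x \<le> y" for c x y
    using that Kd
    by (intro fundamental_theorem_of_calculus)
       (auto simp: has_real_derivative_iff_has_vector_derivative[symmetric] intro: has_field_derivative_at_within)
  have kcont: "continuous_on S (kk c)" for S c
    unfolding kk_def by (intro continuous_intros) auto
  have knn: "kk c t \<ge> 0" for c t
  proof -
    have "\<bar>tanh (a * (t - c))\<bar> \<le> 1" using tanh_real_bounds[of "a * (t - c)"] by auto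
    then have "tanh (a * (t - c)) ^ 2 \<le> 1" by (simp add: abs_square_le_1)
    then show ?thesis using gpos apos by (simp add: kk_def)
  qed
  have chi_eq: "chi T \<delta> = (\<lambda>t. g * tanh (a * (t - 2 * \<delta>)) - g * tanh (a * (t - (T - 2 * \<delta>))))"
    by (rule ext) (simp add: chi_def a_def g_def algebra_simps)
  have dchi: "deriv (chi T \<delta>) t = kk (2 * \<delta>) t - kk (T - 2 * \<delta>) t" for t
    unfolding chi_eq by (intro DERIV_imp_deriv DERIV_diff Kd)
  have fc: "continuous_on ({0..T} - {z}) f" using der by (intro DERIV_continuous_on) auto
  have Nf0: "Nf \<ge> 0"
  proof -
    have "0 \<in> {0..T} - {z}" using assms(1,4) d0 by auto
    then have "ereal \<bar>f 0\<bar> \<le> Nf" unfolding Nf_def sup_norm_on_def by (rule SUP_upper)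
    then show ?thesis by (meson abs_ge_zero ereal_less_eq(5) order_trans)
  qed
  have Nd0: "Nd \<ge> 0"
  proof -
    have "\<delta> \<in> B" using assms(4) d0 by (auto simp: B_def)
    then have "ereal \<bar>f' \<delta>\<bar> \<le> Nd" unfolding Nd_def sup_norm_on_def by (rule SUP_upper)
    then show ?thesis by (meson abs_ge_zero ereal_less_eq(5) order_trans)
  qed
  have c3: "ereal (3 * ln (1 / \<delta>)) > 0" using lnpos by simp
  have c4: "4 * \<delta> / (1 - \<delta>) > 0" using d0 d1 by simp
  show ?thesis
  proof (cases "Nf = \<infinity> \<or> Nd = \<infinity>")
    case True
    have "ereal T * Nf + ereal (3 * ln (1 / \<delta>)) * Nd = \<infinity>"
    proof (cases "Nf = \<infinity>")
      case True
      then have "ereal T * Nf = \<infinity>" using assms(1) by simp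
      moreover have "ereal (3 * ln (1 / \<delta>)) * Nd \<ge> 0" using Nd0 c3 by simp
      ultimately show ?thesis by simp
    next
      case False
      then have "Nd = \<infinity>" using \<open>Nf = \<infinity> \<or> Nd = \<infinity>\<close> by simp
      then have "ereal (3 * ln (1 / \<delta>)) * Nd = \<infinity>" using lnpos by simp
      moreover have "ereal T * Nf \<ge> 0" using Nf0 assms(1) by simp
      ultimately show ?thesis by simp
    qed
    then have "(ereal T * Nf + ereal (3 * ln (1 / \<delta>)) * Nd) * ereal (4 * \<delta> / (1 - \<delta>)) = \<infinity>"
      using c4 by simp
    then show ?thesis unfolding Nf_def Nd_def B_def by (metis ereal_less_eq(1))
  next
    case False
    then obtain M M' where M: "Nf = ereal M" and M': "Nd = ereal M'"
      using Nf0 Nd0 by (cases Nf; cases Nd) auto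
    have M0: "M \<ge> 0" and M'0: "M' \<ge> 0" using Nf0 Nd0 M M' by auto
    have fb: "\<forall>t\<in>{0..T}-{z}. \<bar>f t\<bar> \<le> M"
    proof
      fix t assume "t \<in> {0..T}-{z}"
      then have "ereal \<bar>f t\<bar> \<le> Nf" unfolding Nf_def sup_norm_on_def by (rule SUP_upper)
      then show "\<bar>f t\<bar> \<le> M" using M by simp
    qed
    have fdb: "\<forall>t\<in>B. \<bar>f' t\<bar> \<le> M'"
    proof
      fix t assume "t \<in> B"
      then have "ereal \<bar>f' t\<bar> \<le> Nd" unfolding Nd_def sup_norm_on_def by (rule SUP_upper)
      then show "\<bar>f' t\<bar> \<le> M'" using M' by simp
    qed
    have tb: "tanh x < 1" "tanh x > -1" for x :: real
      using tanh_real_bounds[of x] by auto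
    define K1 where "K1 = g * tanh (a * (T - 2 * \<delta>)) - g * tanh (a * (0 - 2 * \<delta>))"
    have K1b: "K1 \<le> 2 * g"
    proof -
      have "g * tanh (a * (T - 2 * \<delta>)) \<le> g" using tb[of "a * (T - 2 * \<delta>)"] gpos by (simp add: mult_left_le)
      moreover have "- (g * tanh (a * (0 - 2 * \<delta>))) \<le> g" using tb[of "a * (0 - 2 * \<delta>)"] gpos
        by (simp add: mult_left_le)
      ultimately show ?thesis by (simp add: K1_def)
    qed
    have b1: "\<bar>integral {0..T} (\<lambda>t. f t * kk (2 * \<delta>) t) - f (2 * \<delta>)\<bar> \<le> M' * \<delta> + M * (K1 - 1)"
    proof (rule bump[where p = \<delta> and q = "3 * \<delta>" and z = z])
      show "0 \<le> \<delta>" "\<delta> \<le> 3 * \<delta>" "3 * \<delta> \<le> T" using d0 assms(4,5) by auto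
      show "continuous_on ({0..T}-{z}) f" by (rule fc)
      show "\<forall>t\<in>{0..T}-{z}. \<bar>f t\<bar> \<le> M" by (rule fb)
      show "\<bar>f (2 * \<delta>)\<bar> \<le> M" using fb d0 dT assms(4) by auto
      show "M' * \<delta> \<ge> 0" using M'0 d0 by simp
      show "\<forall>t\<in>{\<delta>..3 * \<delta>}-{z}. \<bar>f t - f (2 * \<delta>)\<bar> \<le> M' * \<delta>"
      proof
        fix t assume t: "t \<in> {\<delta>..3 * \<delta>}-{z}"
        show "\<bar>f t - f (2 * \<delta>)\<bar> \<le> M' * \<delta>"
          by (rule mvt_bd[OF der, where p = \<delta> and q = "3 * \<delta>"])
             (use t d0 assms(4,5) fdb in \<open>auto simp: B_def\<close>)
      qed
      show "continuous_on {0..T} (kk (2 * \<delta>))" by (rule kcont)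
      show "\<forall>t\<in>{0..T}. kk (2 * \<delta>) t \<ge> 0" using knn by auto
      have "(kk (2 * \<delta>) has_integral (g * tanh (a * (3 * \<delta> - 2 * \<delta>)) - g * tanh (a * (\<delta> - 2 * \<delta>)))) {\<delta>..3 * \<delta>}"
        using d0 by (intro kint) auto
      moreover have "g * tanh (a * (3 * \<delta> - 2 * \<delta>)) - g * tanh (a * (\<delta> - 2 * \<delta>)) = 1"
      proof -
        have "a * (3 * \<delta> - 2 * \<delta>) = a * \<delta>" "a * (\<delta> - 2 * \<delta>) = - (a * \<delta>)" by (simp_all add: algebra_simps)
        then show ?thesis using gd by (simp add: tanh_minus algebra_simps)
      qed
      ultimately show "(kk (2 * \<delta>) has_integral 1) {\<delta>..3 * \<delta>}" by simp
      show "(kk (2 * \<delta>) has_integral K1) {0..T}" unfolding K1_def using assms(1) by (intro kint) auto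
    qed
    define K2 where "K2 = g * tanh (a * (T - (T - 2 * \<delta>))) - g * tanh (a * (0 - (T - 2 * \<delta>)))"
    have K2b: "K2 \<le> 2 * g"
    proof -
      have "g * tanh (a * (T - (T - 2 * \<delta>))) \<le> g" using tb[of "a * (T - (T - 2 * \<delta>))"] gpos by (simp add: mult_left_le)
      moreover have "- (g * tanh (a * (0 - (T - 2 * \<delta>)))) \<le> g" using tb[of "a * (0 - (T - 2 * \<delta>))"] gpos
        by (intro negle) auto
      ultimately show ?thesis by (simp add: K2_def)
    qed
    have b2: "\<bar>integral {0..T} (\<lambda>t. f t * kk (T - 2 * \<delta>) t) - f (T - 2 * \<delta>)\<bar> \<le> M' * \<delta> + M * (K2 - 1)"
    proof (rule bump[where p = "T - 3 * \<delta>" and q = "T - \<delta>" and z = z])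
      show "0 \<le> T - 3 * \<delta>" "T - 3 * \<delta> \<le> T - \<delta>" "T - \<delta> \<le> T" using d0 assms(4,5) by auto
      show "continuous_on ({0..T}-{z}) f" by (rule fc)
      show "\<forall>t\<in>{0..T}-{z}. \<bar>f t\<bar> \<le> M" by (rule fb)
      show "\<bar>f (T - 2 * \<delta>)\<bar> \<le> M" using fb d0 dT assms(5) by auto
      show "M' * \<delta> \<ge> 0" using M'0 d0 by simp
      show "\<forall>t\<in>{T - 3 * \<delta>..T - \<delta>}-{z}. \<bar>f t - f (T - 2 * \<delta>)\<bar> \<le> M' * \<delta>"
      proof
        fix t assume t: "t \<in> {T - 3 * \<delta>..T - \<delta>}-{z}"
        show "\<bar>f t - f (T - 2 * \<delta>)\<bar> \<le> M' * \<delta>"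
          by (rule mvt_bd[OF der, where p = "T - 3 * \<delta>" and q = "T - \<delta>"])
             (use t d0 assms(4,5) fdb in \<open>auto simp: B_def\<close>)
      qed
      show "continuous_on {0..T} (kk (T - 2 * \<delta>))" by (rule kcont)
      show "\<forall>t\<in>{0..T}. kk (T - 2 * \<delta>) t \<ge> 0" using knn by auto
      have "(kk (T - 2 * \<delta>) has_integral (g * tanh (a * ((T - \<delta>) - (T - 2 * \<delta>))) - g * tanh (a * ((T - 3 * \<delta>) - (T - 2 * \<delta>))))) {T - 3 * \<delta>..T - \<delta>}"
        using d0 by (intro kint) auto
      moreover have "g * tanh (a * ((T - \<delta>) - (T - 2 * \<delta>))) - g * tanh (a * ((T - 3 * \<delta>) - (T - 2 * \<delta>))) = 1"
      proof -
        have "a * ((T - \<delta>) - (T - 2 * \<delta>)) = a * \<delta>" "a * ((T - 3 * \<delta>) - (T - 2 * \<delta>)) = - (a * \<delta>)"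
          by (simp_all add: algebra_simps)
        then show ?thesis using gd by (simp add: tanh_minus algebra_simps)
      qed
      ultimately show "(kk (T - 2 * \<delta>) has_integral 1) {T - 3 * \<delta>..T - \<delta>}" by simp
      show "(kk (T - 2 * \<delta>) has_integral K2) {0..T}" unfolding K2_def using assms(1) by (intro kint) auto
    qed
    have split: "integral {0..T} (\<lambda>t. f t * deriv (chi T \<delta>) t)
        = integral {0..T} (\<lambda>t. f t * kk (2 * \<delta>) t) - integral {0..T} (\<lambda>t. f t * kk (T - 2 * \<delta>) t)"
    proof -
      have "integral {0..T} (\<lambda>t. f t * deriv (chi T \<delta>) t)
          = integral {0..T} (\<lambda>t. f t * kk (2 * \<delta>) t - f t * kk (T - 2 * \<delta>) t)"
        by (simp add: dchi algebra_simps)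
      also have "\<dots> = integral {0..T} (\<lambda>t. f t * kk (2 * \<delta>) t) - integral {0..T} (\<lambda>t. f t * kk (T - 2 * \<delta>) t)"
        by (intro integral_diff int_fk[OF fc fb] kcont)
      finally show ?thesis .
    qed
    have main: "\<bar>integral {0..T} (\<lambda>t. f t * deriv (chi T \<delta>) t) - f (2 * \<delta>) + f (T - 2 * \<delta>)\<bar>
        \<le> 2 * (M' * \<delta>) + 2 * (M * (2 * g - 1))"
    proof -
      have "M * (K1 - 1) \<le> M * (2 * g - 1)" "M * (K2 - 1) \<le> M * (2 * g - 1)"
        using K1b K2b M0 by (auto intro: mult_left_mono)
      then show ?thesis using b1 b2 split by linarith
    qed
    have e1: "2 * g - 1 \<le> 2 * T * \<delta> / (1 - \<delta>)"
    proof -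
      have "\<delta> ^ 6 \<le> \<delta>" using d0 d1 by (simp add: power_le_one_iff power_decreasing[of 1 6 \<delta>, simplified])
      have "\<delta> ^ 6 \<le> \<delta> ^ 2" using d0 d1 by (intro power_decreasing) auto
      also have "\<dots> \<le> T * \<delta>" using d0 dT by (simp add: power2_eq_square)
      finally have a1: "\<delta> ^ 6 \<le> T * \<delta>" .
      have a2: "1 - \<delta> \<le> 1 - \<delta> ^ 6" using \<open>\<delta> ^ 6 \<le> \<delta>\<close> by simp
      have "2 * \<delta> ^ 6 / (1 - \<delta> ^ 6) \<le> 2 * (T * \<delta>) / (1 - \<delta>)"
        using a1 a2 d1 d6 d0 assms(1) by (intro frac_le) (auto intro: mult_nonneg_nonneg)
      then show ?thesis using g2 by simp
    qed
    have e2: "\<delta> \<le> 6 * ln (1 / \<delta>) * \<delta> / (1 - \<delta>)"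
    proof -
      have "ln \<delta> \<le> \<delta> - 1" using d0 by (rule ln_le_minus_one)
      then have "1 - \<delta> \<le> ln (1 / \<delta>)" using lnd by simp
      then have "1 \<le> 6 * ln (1 / \<delta>) / (1 - \<delta>)" using d1 by (simp add: field_simps)
      then have "\<delta> * 1 \<le> \<delta> * (6 * ln (1 / \<delta>) / (1 - \<delta>))" using d0 by (intro mult_left_mono) auto
      then show ?thesis by (simp add: field_simps)
    qed
    have fin: "2 * (M' * \<delta>) + 2 * (M * (2 * g - 1)) \<le> (T * M + 3 * ln (1 / \<delta>) * M') * (4 * \<delta> / (1 - \<delta>))"
    proof -
      have "2 * (M * (2 * g - 1)) \<le> 2 * (M * (2 * T * \<delta> / (1 - \<delta>)))"
        using mult_left_mono[OF e1 M0] by linarith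
      moreover have "2 * (M' * \<delta>) \<le> 2 * (M' * (6 * ln (1 / \<delta>) * \<delta> / (1 - \<delta>)))"
        using mult_left_mono[OF e2 M'0] by linarith
      moreover have "2 * (M * (2 * T * \<delta> / (1 - \<delta>))) + 2 * (M' * (6 * ln (1 / \<delta>) * \<delta> / (1 - \<delta>)))
          = (T * M + 3 * ln (1 / \<delta>) * M') * (4 * \<delta> / (1 - \<delta>))"
      proof -
        have aux: "\<And>w L::real. w \<noteq> 0 \<Longrightarrow> 2 * (M * (2 * T * \<delta> / w)) + 2 * (M' * (6 * L * \<delta> / w)) = (T * M + 3 * L * M') * (4 * \<delta> / w)"
          by (simp add: field_simps)
        show ?thesis using d1 by (intro aux) auto
      qed
      ultimately show ?thesis by linarith
    qed
    show ?thesis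
      unfolding Nf_def[symmetric] B_def[symmetric] Nd_def[symmetric] M M'
      using main fin by simp
  qed
qed

end
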